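(* If $L$ is a finite, simple, modular, complemented lattice, then $\mathsf{C}(L)=\mathsf{Pol}_{0,1}(L)$.
   Context: $L$ has bounds $0,1$. $L$ is simple if its only congruences (compatible equivalence relations) are the identity relation and $L^2$. $L$ is modular if $a\le c$ implies $a\vee(b\wedge c)=(a\vee b)\wedge c$; complemented if every $x$ has $y$ with $x\wedge y=0$, $x\vee y=1$. An $n$-ary aggregation function on $L$ ($n\ge1$) is a nondecreasing map $A:L^n\to L$ with $A(0,\dots,0)=0$, $A(1,\dots,1)=1$; $\mathsf{C}(L)$ is the set of all of them. Polynomials on $L$ are functions $L^n\to L$ built from projections and constants by finitely many pointwise joins and meets; $\mathsf{Pol}_{0,1}(L)$ is the set of polynomials preserving $0$ and $1$. *)

theory Defs
  imports Main
begin

definition lattice_congruence :: "('a::lattice \<times> 'a) set \<Rightarrow> bool" where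
  "lattice_congruence \<theta> \<longleftrightarrow> equiv UNIV \<theta> \<and>
     (\<forall>a b c d. (a, b) \<in> \<theta> \<and> (c, d) \<in> \<theta> \<longrightarrow>
        (sup a c, sup b d) \<in> \<theta> \<and> (inf a c, inf b d) \<in> \<theta>)"

definition simple_lattice :: "'a::lattice itself \<Rightarrow> bool" where
  "simple_lattice _ \<longleftrightarrow> (\<forall>\<theta> :: ('a \<times> 'a) set. lattice_congruence \<theta> \<longrightarrow> \<theta> = Id \<or> \<theta> = UNIV)"

definition modular_lattice :: "'a::lattice itself \<Rightarrow> bool" where
  "modular_lattice _ \<longleftrightarrow> (\<forall>a b c :: 'a. a \<le> c \<longrightarrow> sup a (inf b c) = inf (sup a b) c)"

definition complemented_lattice :: "'a::bounded_lattice itself \<Rightarrow> bool" where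
  "complemented_lattice _ \<longleftrightarrow> (\<forall>x :: 'a. \<exists>y. inf x y = bot \<and> sup x y = top)"

definition aggregation_functions :: "(('n::finite \<Rightarrow> 'a::bounded_lattice) \<Rightarrow> 'a) set" where
  "aggregation_functions = {A. mono A \<and> A (\<lambda>_. bot) = bot \<and> A (\<lambda>_. top) = top}"

inductive_set polynomials :: "(('n \<Rightarrow> 'a::lattice) \<Rightarrow> 'a) set" where
  proj: "(\<lambda>x. x i) \<in> polynomials"
| const: "(\<lambda>x. c) \<in> polynomials"
| join: "f \<in> polynomials \<Longrightarrow> g \<in> polynomials \<Longrightarrow> (\<lambda>x. sup (f x) (g x)) \<in> polynomials"
| meet: "f \<in> polynomials \<Longrightarrow> g \<in> polynomials \<Longrightarrow> (\<lambda>x. inf (f x) (g x)) \<in> polynomials"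

definition polynomials01 :: "(('n \<Rightarrow> 'a::bounded_lattice) \<Rightarrow> 'a) set" where
  "polynomials01 = {p \<in> polynomials. p (\<lambda>_. bot) = bot \<and> p (\<lambda>_. top) = top}"

end

theory Submission
  imports Defs
begin

inductive_set upoly :: "('a::lattice \<Rightarrow> 'a) set" where
  uid: "(\<lambda>x. x) \<in> upoly"
| uconst: "(\<lambda>x. c) \<in> upoly"
| ujoin: "f \<in> upoly \<Longrightarrow> g \<in> upoly \<Longrightarrow> (\<lambda>x. sup (f x) (g x)) \<in> upoly"
| umeet: "f \<in> upoly \<Longrightarrow> g \<in> upoly \<Longrightarrow> (\<lambda>x. inf (f x) (g x)) \<in> upoly"

lemma upoly_mono: "f \<in> upoly \<Longrightarrow> mono f"
proof (induction rule: upoly.induct)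
  case uid show ?case by (rule monoI) simp
next
  case (uconst c) show ?case by (rule monoI) simp
next
  case (ujoin f g) then show ?case by (intro monoI sup_mono) (auto dest: monoD)
next
  case (umeet f g) then show ?case by (intro monoI inf_mono) (auto dest: monoD)
qed

lemma upoly_comp: "f \<in> upoly \<Longrightarrow> g \<in> upoly \<Longrightarrow> (\<lambda>x. f (g x)) \<in> upoly"
  by (induction rule: upoly.induct) (auto intro: upoly.intros)

lemma upoly_poly: "g \<in> upoly \<Longrightarrow> (\<lambda>x. g (x i)) \<in> polynomials"
  by (induction rule: upoly.induct) (auto intro: polynomials.intros)

lemma poly_mono: "f \<in> polynomials \<Longrightarrow> mono f"
proof (induction rule: polynomials.induct)
  case (proj i) show ?case by (rule monoI) (simp add: le_fun_def)
next
  case (const c) show ?case by (rule monoI) simp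
next
  case (join f g) then show ?case by (intro monoI sup_mono) (auto dest: monoD)
next
  case (meet f g) then show ?case by (intro monoI inf_mono) (auto dest: monoD)
qed

lemma upoly_Inf:
  fixes h :: "'i \<Rightarrow> 'a::bounded_lattice \<Rightarrow> 'a"
  shows "finite A \<Longrightarrow> (\<forall>i\<in>A. h i \<in> upoly) \<Longrightarrow>
    \<exists>p\<in>upoly. \<forall>x. (\<forall>i\<in>A. p x \<le> h i x) \<and> (\<forall>z. (\<forall>i\<in>A. z \<le> h i x) \<longrightarrow> z \<le> p x)"
proof (induction A rule: finite_induct)
  case empty
  show ?case by (rule bexI[of _ "\<lambda>x. top"]) (auto intro: upoly.intros)
next
  case (insert i A)
  then obtain p where p: "p \<in> upoly" "\<forall>x. (\<forall>i\<in>A. p x \<le> h i x) \<and> (\<forall>z. (\<forall>i\<in>A. z \<le> h i x) \<longrightarrow> z \<le> p x)"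
    by auto
  show ?case
    by (rule bexI[of _ "\<lambda>x. inf (h i x) (p x)"]) (use p insert in \<open>auto intro: upoly.intros le_infI2\<close>)
qed

lemma poly_Inf:
  fixes h :: "'i \<Rightarrow> ('n \<Rightarrow> 'a::bounded_lattice) \<Rightarrow> 'a"
  shows "finite A \<Longrightarrow> (\<forall>i\<in>A. h i \<in> polynomials) \<Longrightarrow>
    \<exists>p\<in>polynomials. \<forall>x. (\<forall>i\<in>A. p x \<le> h i x) \<and> (\<forall>z. (\<forall>i\<in>A. z \<le> h i x) \<longrightarrow> z \<le> p x)"
proof (induction A rule: finite_induct)
  case empty
  show ?case by (rule bexI[of _ "\<lambda>x. top"]) (auto intro: polynomials.intros)
next
  case (insert i A)
  then obtain p where p: "p \<in> polynomials" "\<forall>x. (\<forall>i\<in>A. p x \<le> h i x) \<and> (\<forall>z. (\<forall>i\<in>A. z \<le> h i x) \<longrightarrow> z \<le> p x)"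
    by auto
  show ?case
    by (rule bexI[of _ "\<lambda>x. inf (h i x) (p x)"]) (use p insert in \<open>auto intro: polynomials.intros le_infI2\<close>)
qed

lemma poly_Sup:
  fixes h :: "'i \<Rightarrow> ('n \<Rightarrow> 'a::bounded_lattice) \<Rightarrow> 'a"
  shows "finite A \<Longrightarrow> (\<forall>i\<in>A. h i \<in> polynomials) \<Longrightarrow>
    \<exists>p\<in>polynomials. \<forall>x. (\<forall>i\<in>A. h i x \<le> p x) \<and> (\<forall>z. (\<forall>i\<in>A. h i x \<le> z) \<longrightarrow> p x \<le> z)"
proof (induction A rule: finite_induct)
  case empty
  show ?case by (rule bexI[of _ "\<lambda>x. bot"]) (auto intro: polynomials.intros)
next
  case (insert i A)
  then obtain p where p: "p \<in> polynomials" "\<forall>x. (\<forall>i\<in>A. h i x \<le> p x) \<and> (\<forall>z. (\<forall>i\<in>A. h i x \<le> z) \<longrightarrow> p x \<le> z)"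
    by auto
  show ?case
    by (rule bexI[of _ "\<lambda>x. sup (h i x) (p x)"]) (use p insert in \<open>auto intro: polynomials.intros le_supI2\<close>)
qed

lemma distrib_elem:
  fixes c :: "'a::bounded_lattice"
  assumes mod: "modular_lattice TYPE('a)" and comp: "complemented_lattice TYPE('a)"
    and cl: "\<And>a b. inf a b = bot \<Longrightarrow> inf (sup c a) b \<le> c"
  shows "inf (sup x c) (sup z c) \<le> sup (inf x z) c"
proof -
  have M: "\<And>a b c::'a. a \<le> c \<Longrightarrow> sup a (inf b c) = inf (sup a b) c"
    using mod by (simp add: modular_lattice_def)
  define w where "w = inf x z"
  obtain w' where w': "inf w w' = bot" "sup w w' = top"
    using comp by (auto simp: complemented_lattice_def)
  define b where "b = inf w' z"
  have bw: "sup w b = z" unfolding b_def using M[of w z w'] w' by (simp add: w_def)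
  have bx: "inf x b = bot" using w' by (simp add: b_def w_def inf_assoc inf_left_commute inf_commute)
  have cb: "inf (sup c x) b \<le> c" using cl[OF bx] .
  have "inf (sup x c) z = sup w (inf b (sup x c))"
    using M[of w "sup x c" b] bw by (simp add: w_def le_supI1 inf_commute)
  also have "\<dots> \<le> sup w c" using cb by (auto simp: inf_commute sup_commute intro: le_supI1)
  finally have 1: "inf (sup x c) z \<le> sup w c" .
  have "inf (sup x c) (sup z c) = sup c (inf z (sup x c))"
    using M[of c "sup x c" z] by (simp add: inf_commute sup_commute)
  also have "\<dots> \<le> sup w c" using 1 by (simp add: inf_commute)
  finally show ?thesis by (simp add: w_def)
qed

lemma reach_top:
  fixes d :: "'a::{bounded_lattice,finite}"
  assumes simp: "simple_lattice TYPE('a)" and mod: "modular_lattice TYPE('a)"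
    and comp: "complemented_lattice TYPE('a)" and d: "d \<noteq> bot"
  shows "\<exists>r\<in>upoly. r bot = bot \<and> r d = top"
proof -
  define S where "S = {p d | p. p \<in> upoly \<and> p bot = bot}"
  have dS: "d \<in> S" unfolding S_def by (auto intro!: exI[of _ "\<lambda>x. x"] upoly.intros)
  have "finite S" by simp
  then obtain c where cS: "c \<in> S" and cmax: "\<forall>s\<in>S. c \<le> s \<longrightarrow> c = s"
    using finite_has_maximal[of S] dS by blast
  from cS obtain p0 where p0: "p0 \<in> upoly" "p0 bot = bot" "c = p0 d" unfolding S_def by blast
  have ub: "s \<le> c" if "s \<in> S" for s
  proof -
    from that obtain p where p: "p \<in> upoly" "p bot = bot" "s = p d" unfolding S_def by blast
    have "sup c s \<in> S" unfolding S_def using p p0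
      by (auto intro!: exI[of _ "\<lambda>x. sup (p0 x) (p x)"] upoly.intros)
    then have "c = sup c s" using cmax by auto
    then show ?thesis by (metis sup.cobounded2)
  qed
  have cl: "inf (sup c a) b \<le> c" if "inf a b = bot" for a b
  proof -
    have "(\<lambda>x. inf (sup x a) b) \<in> upoly" by (intro upoly.umeet upoly.ujoin upoly.uid upoly.uconst)
    then have "(\<lambda>x. inf (sup (p0 x) a) b) \<in> upoly" using upoly_comp[OF _ p0(1)] by blast
    then have "inf (sup c a) b \<in> S" unfolding S_def using p0 that by auto
    then show ?thesis using ub by blast
  qed
  have dist: "inf (sup x c) (sup z c) = sup (inf x z) c" for x z
    using distrib_elem[OF mod comp cl, of x z]
    by (simp add: antisym le_supI1 sup_mono)
  define \<theta> where "\<theta> = {(x, y). sup x c = sup y c}"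
  have "lattice_congruence \<theta>"
    unfolding lattice_congruence_def \<theta>_def
  proof (intro conjI allI impI)
    show "equiv UNIV {(x, y). sup x c = sup y c}"
      by (auto simp: equiv_def refl_on_def sym_def trans_def)
  next
    fix a b e f :: 'a
    assume h: "(a, b) \<in> {(x, y). sup x c = sup y c} \<and> (e, f) \<in> {(x, y). sup x c = sup y c}"
    then have h1: "sup a c = sup b c" and h2: "sup e c = sup f c" by auto
    have "sup (sup a e) c = sup (sup a c) (sup e c)" by (simp add: sup_assoc sup_commute sup_left_commute)
    also have "\<dots> = sup (sup b c) (sup f c)" using h1 h2 by simp
    also have "\<dots> = sup (sup b f) c" by (simp add: sup_assoc sup_commute sup_left_commute)
    finally show "(sup a e, sup b f) \<in> {(x, y). sup x c = sup y c}" by simp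
    have "sup (inf a e) c = inf (sup b c) (sup f c)" using dist[of a e] h1 h2 by simp
    then show "(inf a e, inf b f) \<in> {(x, y). sup x c = sup y c}" using dist[of b f] by simp
  qed
  then have "\<theta> = Id \<or> \<theta> = UNIV" using simp by (simp add: simple_lattice_def)
  moreover have "d \<le> c" using ub dS by blast
  ultimately have "c = top"
  proof (elim disjE)
    assume "\<theta> = Id"
    moreover have "(bot, c) \<in> \<theta>" by (simp add: \<theta>_def)
    ultimately have "c = bot" by simp
    with \<open>d \<le> c\<close> d show ?thesis by (simp add: bot_unique)
  next
    assume "\<theta> = UNIV"
    then have "(bot, top) \<in> \<theta>" by simp
    then show ?thesis by (simp add: \<theta>_def)
  qed
  then show ?thesis using p0 by auto
qed

lemma separate:
  fixes a y :: "'a::{bounded_lattice,finite}"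
  assumes simp: "simple_lattice TYPE('a)" and mod: "modular_lattice TYPE('a)"
    and comp: "complemented_lattice TYPE('a)" and ay: "\<not> a \<le> y"
  shows "\<exists>q\<in>upoly. q y = bot \<and> q a = top"
proof -
  have M: "\<And>a b c::'a. a \<le> c \<Longrightarrow> sup a (inf b c) = inf (sup a b) c"
    using mod by (simp add: modular_lattice_def)
  obtain y' where y': "inf y y' = bot" "sup y y' = top"
    using comp by (auto simp: complemented_lattice_def)
  define u where "u = inf y' (sup y a)"
  have u: "u \<noteq> bot"
  proof
    assume "u = bot"
    then have "sup y bot = inf top (sup y a)" using M[of y "sup y a" y'] y' by (simp add: u_def)
    then have "a \<le> y" by (metis inf_top_left sup_bot_right sup.cobounded2)
    with ay show False by simp
  qed
  obtain r where r: "r \<in> upoly" "r bot = bot" "r u = top"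
    using reach_top[OF simp mod comp u] by blast
  have "(\<lambda>x. inf (sup x y) u) \<in> upoly" by (intro upoly.umeet upoly.ujoin upoly.uid upoly.uconst)
  then have q: "(\<lambda>x. r (inf (sup x y) u)) \<in> upoly" using upoly_comp[OF r(1)] by blast
  have "inf y u = bot" using y' by (simp add: u_def inf_assoc[symmetric])
  moreover have "inf (sup a y) u = u" by (simp add: u_def sup_commute inf_absorb2)
  ultimately show ?thesis using q r by (intro bexI[OF _ q]) simp
qed

lemma indicator:
  fixes a :: "'a::{bounded_lattice,finite}"
  assumes simp: "simple_lattice TYPE('a)" and mod: "modular_lattice TYPE('a)"
    and comp: "complemented_lattice TYPE('a)"
  shows "\<exists>g\<in>upoly. \<forall>y. g y = (if a \<le> y then top else bot)"
proof -
  have "\<forall>y. \<exists>q. \<not> a \<le> y \<longrightarrow> q \<in> upoly \<and> q y = bot \<and> q a = top"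
    using separate[OF simp mod comp] by blast
  then obtain Q where Q: "\<And>y. \<not> a \<le> y \<Longrightarrow> Q y \<in> upoly \<and> Q y y = bot \<and> Q y a = top"
    by metis
  obtain p where p: "p \<in> upoly" "\<forall>x. (\<forall>i\<in>{y. \<not> a \<le> y}. p x \<le> Q i x) \<and> (\<forall>z. (\<forall>i\<in>{y. \<not> a \<le> y}. z \<le> Q i x) \<longrightarrow> z \<le> p x)"
    using upoly_Inf[of "{y. \<not> a \<le> y}" Q] Q by auto
  have "p y = (if a \<le> y then top else bot)" for y
  proof (cases "a \<le> y")
    case True
    have "top \<le> Q i y" if "\<not> a \<le> i" for i
      using Q[OF that] upoly_mono[of "Q i"] True by (metis monoD)
    then have "top \<le> p y" using p by blast
    then show ?thesis using True by (simp add: top_unique)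
  next
    case False
    then have "p y \<le> Q y y" using p by blast
    then show ?thesis using False Q[OF False] by (simp add: bot_unique)
  qed
  then show ?thesis using p by blast
qed

theorem mainTheorem7:
  assumes "simple_lattice TYPE('a::{bounded_lattice, finite})"
    and "modular_lattice TYPE('a)"
    and "complemented_lattice TYPE('a)"
  shows "(aggregation_functions :: (('n::finite \<Rightarrow> 'a) \<Rightarrow> 'a) set) = polynomials01"
proof
  show "polynomials01 \<subseteq> (aggregation_functions :: (('n::finite \<Rightarrow> 'a) \<Rightarrow> 'a) set)"
    by (auto simp: polynomials01_def aggregation_functions_def intro: poly_mono)
next
  show "(aggregation_functions :: (('n::finite \<Rightarrow> 'a) \<Rightarrow> 'a) set) \<subseteq> polynomials01"
  proof
    fix f :: "('n \<Rightarrow> 'a) \<Rightarrow> 'a"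
    assume "f \<in> aggregation_functions"
    then have fm: "mono f" and f0: "f (\<lambda>_. bot) = bot" and f1: "f (\<lambda>_. top) = top"
      by (auto simp: aggregation_functions_def)
    have "\<forall>b::'a. \<exists>g. g \<in> upoly \<and> (\<forall>y. g y = (if b \<le> y then top else bot))"
      using indicator[OF assms] by blast
    then obtain U where U: "\<And>b::'a. U b \<in> upoly" "\<And>b y. U b y = (if b \<le> y then top else bot)"
      by metis
    have "\<forall>a::'n\<Rightarrow>'a. \<exists>m. m \<in> polynomials \<and> (\<forall>x. (\<forall>i. m x \<le> U (a i) (x i)) \<and> (\<forall>z. (\<forall>i. z \<le> U (a i) (x i)) \<longrightarrow> z \<le> m x))"
    proof
      fix a :: "'n \<Rightarrow> 'a"
      show "\<exists>m. m \<in> polynomials \<and> (\<forall>x. (\<forall>i. m x \<le> U (a i) (x i)) \<and> (\<forall>z. (\<forall>i. z \<le> U (a i) (x i)) \<longrightarrow> z \<le> m x))"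
      proof -
        have "\<forall>i\<in>UNIV. (\<lambda>x. U (a i) (x i)) \<in> polynomials" by (auto intro: upoly_poly U(1))
        from poly_Inf[OF finite_UNIV this] show ?thesis by auto
      qed
    qed
    then have "\<exists>Mf. \<forall>a::'n\<Rightarrow>'a. Mf a \<in> polynomials \<and>
      (\<forall>x. (\<forall>i. Mf a x \<le> U (a i) (x i)) \<and> (\<forall>z. (\<forall>i. z \<le> U (a i) (x i)) \<longrightarrow> z \<le> Mf a x))"
      by (rule choice)
    then obtain Mf where Mf0: "\<forall>a::'n\<Rightarrow>'a. Mf a \<in> polynomials \<and>
      (\<forall>x. (\<forall>i. Mf a x \<le> U (a i) (x i)) \<and> (\<forall>z. (\<forall>i. z \<le> U (a i) (x i)) \<longrightarrow> z \<le> Mf a x))"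
      by (elim exE)
    then have Mf: "\<And>a. Mf a \<in> polynomials"
      "\<And>a x. (\<forall>i. Mf a x \<le> U (a i) (x i)) \<and> (\<forall>z. (\<forall>i. z \<le> U (a i) (x i)) \<longrightarrow> z \<le> Mf a x)"
      by auto
    have Mval: "Mf a x = (if a \<le> x then top else bot)" for a x
    proof (cases "a \<le> x")
      case True
      then have "\<forall>i. top \<le> U (a i) (x i)" using U(2) by (simp add: le_fun_def)
      then have "top \<le> Mf a x" using Mf(2) by blast
      then show ?thesis using True by (simp add: top_unique)
    next
      case False
      then obtain i where "\<not> a i \<le> x i" by (auto simp: le_fun_def)
      then have "Mf a x \<le> bot" using Mf(2)[of a x] U(2) by metis
      then show ?thesis using False by (simp add: bot_unique)
    qed
    have Pin: "\<forall>a\<in>UNIV. (\<lambda>x. inf (f a) (Mf a x)) \<in> polynomials"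
      using Mf(1) by (auto intro: polynomials.intros)
    obtain J where J: "J \<in> polynomials" "\<forall>x. (\<forall>a\<in>UNIV. inf (f a) (Mf a x) \<le> J x) \<and> (\<forall>z. (\<forall>a\<in>UNIV. inf (f a) (Mf a x) \<le> z) \<longrightarrow> J x \<le> z)"
      using poly_Sup[OF finite_UNIV Pin] by blast
    have "J x = f x" for x
    proof (rule antisym)
      have "inf (f a) (Mf a x) \<le> f x" for a
        using fm by (auto simp: Mval monoD)
      then show "J x \<le> f x" using J by blast
      have "inf (f x) (Mf x x) \<le> J x" using J by blast
      then show "f x \<le> J x" by (simp add: Mval)
    qed
    then have "f = J" by auto
    then show "f \<in> polynomials01" using J f0 f1 by (simp add: polynomials01_def)
  qed
qed

end
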